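(* Let $\mathfrak{M}$ be a structure of vocabulary $\{+,\cdot,+',\cdot'\}$ (all four symbols binary function symbols) which is a model of $P(+,\cdot,\{+',\cdot'\})\cup P(+',\cdot',\{+,\cdot\})$. Then there is an isomorphism $\pi:\mathfrak{M}\restriction\{+,\cdot\}\cong\mathfrak{M}\restriction\{+',\cdot'\}$, and moreover $\pi$ is first order definable on $\mathfrak{M}$.
   Context: $P(+,\cdot)$ denotes the first order Peano axioms in the vocabulary $\{+,\cdot\}$, with Induction Schema $\forall x_1\ldots x_n((\phi(0,\bar x)\wedge\forall y(\phi(y,\bar x)\to\phi(y+1,\bar x)))\to\forall y\phi(y,\bar x))$, where $0$ and $1$ are defined terms denoting the identity elements of $+$ and $\cdot$ respectively. For a vocabulary $L$, $P(+,\cdot,L)$ denotes the extension of $P(+,\cdot)$ in which the Induction Schema is taken for all first order formulas $\phi(y,x_1,\ldots,x_n)$ of the vocabulary $\{+,\cdot\}\cup L$. $P(+',\cdot',L)$ is defined analogously for the vocabulary $\{+',\cdot'\}$ (with $0',1'$ the identity elements of $+',\cdot'$). $\mathfrak{M}\restriction L_0$ denotes the reduct of $\mathfrak{M}$ to $L_0$. First order definable means definable by a first order formula of vocabulary $\{+,\cdot,+',\cdot'\}$ in $\mathfrak{M}$. *)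

theory Defs
  imports Main
begin

datatype fsym = Plus | Times | Plus' | Times'

datatype trm = Var nat | App fsym trm trm

datatype fm = Eq trm trm | Neg fm | Conj fm fm | Disj fm fm | Ex nat fm | All nat fm

fun evalt :: "(fsym \<Rightarrow> 'a \<Rightarrow> 'a \<Rightarrow> 'a) \<Rightarrow> (nat \<Rightarrow> 'a) \<Rightarrow> trm \<Rightarrow> 'a" where
  "evalt I e (Var n) = e n"
| "evalt I e (App f s t) = I f (evalt I e s) (evalt I e t)"

fun sat :: "(fsym \<Rightarrow> 'a \<Rightarrow> 'a \<Rightarrow> 'a) \<Rightarrow> (nat \<Rightarrow> 'a) \<Rightarrow> fm \<Rightarrow> bool" where
  "sat I e (Eq s t) = (evalt I e s = evalt I e t)"
| "sat I e (Neg \<phi>) = (\<not> sat I e \<phi>)"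
| "sat I e (Conj \<phi> \<psi>) = (sat I e \<phi> \<and> sat I e \<psi>)"
| "sat I e (Disj \<phi> \<psi>) = (sat I e \<phi> \<or> sat I e \<psi>)"
| "sat I e (Ex n \<phi>) = (\<exists>a. sat I (e(n := a)) \<phi>)"
| "sat I e (All n \<phi>) = (\<forall>a. sat I (e(n := a)) \<phi>)"

definition is_identity :: "('a \<Rightarrow> 'a \<Rightarrow> 'a) \<Rightarrow> 'a \<Rightarrow> bool" where
  "is_identity f z \<longleftrightarrow> (\<forall>x. f x z = x \<and> f z x = x)"

text \<open>The structure I is a model of the Peano axioms P(p,t,L) where p, t play the roles
  of + and *, 0 and 1 are the identity elements of p and t, and L consists of the remaining
  two symbols, so that the Induction Schema ranges over ALL first-order formulas of the
  full vocabulary {+,*,+',*'}, with arbitrary parameters (the free variables other than y).\<close>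
definition peano_model :: "(fsym \<Rightarrow> 'a \<Rightarrow> 'a \<Rightarrow> 'a) \<Rightarrow> fsym \<Rightarrow> fsym \<Rightarrow> bool" where
  "peano_model I p t \<longleftrightarrow>
     (\<exists>z u. is_identity (I p) z \<and> is_identity (I t) u \<and>
        (\<forall>x. I p x u \<noteq> z) \<and>
        (\<forall>x y. I p x u = I p y u \<longrightarrow> x = y) \<and>
        (\<forall>x. I p x z = x) \<and>
        (\<forall>x y. I p x (I p y u) = I p (I p x y) u) \<and>
        (\<forall>x. I t x z = z) \<and>
        (\<forall>x y. I t x (I p y u) = I p (I t x y) x) \<and>
        (\<forall>(\<phi>::fm) (y::nat) (e::nat \<Rightarrow> 'a).
            (sat I (e(y := z)) \<phi> \<and> (\<forall>a. sat I (e(y := a)) \<phi> \<longrightarrow> sat I (e(y := I p a u)) \<phi>))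
            \<longrightarrow> (\<forall>a. sat I (e(y := a)) \<phi>)))"

definition reduct_iso :: "(fsym \<Rightarrow> 'a \<Rightarrow> 'a \<Rightarrow> 'a) \<Rightarrow> ('a \<Rightarrow> 'a) \<Rightarrow> bool" where
  "reduct_iso I \<pi> \<longleftrightarrow> bij \<pi> \<and>
     (\<forall>x y. \<pi> (I Plus x y) = I Plus' (\<pi> x) (\<pi> y)) \<and>
     (\<forall>x y. \<pi> (I Times x y) = I Times' (\<pi> x) (\<pi> y))"

definition fo_definable_fun :: "(fsym \<Rightarrow> 'a \<Rightarrow> 'a \<Rightarrow> 'a) \<Rightarrow> ('a \<Rightarrow> 'a) \<Rightarrow> bool" where
  "fo_definable_fun I \<pi> \<longleftrightarrow>
     (\<exists>(\<phi>::fm) i j. i \<noteq> j \<and> (\<forall>e. sat I e \<phi> \<longleftrightarrow> \<pi> (e i) = e j))"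

end

theory Submission
  imports Defs
begin


fun tvars :: "trm \<Rightarrow> nat set" where
  "tvars (Var n) = {n}"
| "tvars (App f a b) = tvars a \<union> tvars b"

lemma evalt_upd[simp]: "k \<notin> tvars a \<Longrightarrow> evalt I (e(k:=v)) a = evalt I e a"
  by (induction a) auto

definition "LEf p a b k = Ex k (Eq (App p a (Var k)) b)"
definition "LTf p a b k = Conj (LEf p a b k) (Neg (Eq a b))"
definition "MODf p t x m r k = Conj (LTf p r m k) (Ex k (Eq x (App p (App t (Var k) m) r)))"
definition "mit p t i d w = App p (App t (App p i w) d) w"
definition "BETAf p t c d i r w k = MODf p t c (mit p t i d w) r k"
definition "DVDf t m L k = Ex k (Eq L (App t (Var k) m))"
definition "INVf p t L m w k1 k2 = Ex k1 (Ex k2 (Eq (App t (Var k1) L) (App p (App t (Var k2) m) w)))"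

locale pa =
  fixes I :: "fsym \<Rightarrow> 'a \<Rightarrow> 'a \<Rightarrow> 'a" and p t :: fsym
  assumes pm: "peano_model I p t"
begin

definition ax1 :: "'a \<Rightarrow> 'a \<Rightarrow> bool" where
 "ax1 z u = (is_identity (I p) z \<and> is_identity (I t) u \<and>
        (\<forall>x. I p x u \<noteq> z) \<and>
        (\<forall>x y. I p x u = I p y u \<longrightarrow> x = y) \<and>
        (\<forall>x. I p x z = x) \<and>
        (\<forall>x y. I p x (I p y u) = I p (I p x y) u) \<and>
        (\<forall>x. I t x z = z) \<and>
        (\<forall>x y. I t x (I p y u) = I p (I t x y) x))"

definition ax2 :: "'a \<Rightarrow> 'a \<Rightarrow> bool" where
 "ax2 z u = (\<forall>(\<phi>::fm) (y::nat) (e::nat \<Rightarrow> 'a).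
            (sat I (e(y := z)) \<phi> \<and> (\<forall>a. sat I (e(y := a)) \<phi> \<longrightarrow> sat I (e(y := I p a u)) \<phi>))
            \<longrightarrow> (\<forall>a. sat I (e(y := a)) \<phi>))"

definition "ZU = (SOME zu. ax1 (fst zu) (snd zu) \<and> ax2 (fst zu) (snd zu))"
definition "Z = fst ZU"
definition "U = snd ZU"

lemma axZU: "ax1 Z U \<and> ax2 Z U"
proof -
  have "\<exists>zu. ax1 (fst zu) (snd zu) \<and> ax2 (fst zu) (snd zu)"
  proof -
    obtain z u where "is_identity (I p) z \<and> is_identity (I t) u \<and>
        (\<forall>x. I p x u \<noteq> z) \<and>
        (\<forall>x y. I p x u = I p y u \<longrightarrow> x = y) \<and>
        (\<forall>x. I p x z = x) \<and>
        (\<forall>x y. I p x (I p y u) = I p (I p x y) u) \<and>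
        (\<forall>x. I t x z = z) \<and>
        (\<forall>x y. I t x (I p y u) = I p (I t x y) x) \<and> ax2 z u"
      using pm unfolding peano_model_def ax2_def by blast
    then have "ax1 z u \<and> ax2 z u" unfolding ax1_def by blast
    then show ?thesis by (intro exI[of _ "(z,u)"]) simp
  qed
  then have "ax1 (fst ZU) (snd ZU) \<and> ax2 (fst ZU) (snd ZU)" unfolding ZU_def by (rule someI_ex)
  then show ?thesis by (simp add: Z_def U_def)
qed

abbreviation pl (infixl "\<oplus>" 65) where "pl \<equiv> I p"
abbreviation tm (infixl "\<otimes>" 70) where "tm \<equiv> I t"
abbreviation S where "S x \<equiv> x \<oplus> U"

lemma idp: "Z \<oplus> x = x" "x \<oplus> Z = x" and idt: "U \<otimes> x = x" "x \<otimes> U = x"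
  and S_nz: "S x \<noteq> Z" and S_inj: "S x = S y \<Longrightarrow> x = y"
  and add_S: "x \<oplus> S y = S (x \<oplus> y)" and mul_Z: "x \<otimes> Z = Z"
  and mul_S: "x \<otimes> S y = x \<otimes> y \<oplus> x"
  using conjunct1[OF axZU] unfolding ax1_def is_identity_def by auto

lemma ind_fm:
  assumes sem: "\<And>a. sat I (e(y:=a)) \<phi> = Q a"
    and base: "Q Z" and step: "\<And>a. Q a \<Longrightarrow> Q (S a)"
  shows "Q a"
proof -
  have "\<forall>(\<phi>::fm) (y::nat) (e::nat \<Rightarrow> 'a).
            (sat I (e(y := Z)) \<phi> \<and> (\<forall>a. sat I (e(y := a)) \<phi> \<longrightarrow> sat I (e(y := S a)) \<phi>))
            \<longrightarrow> (\<forall>a. sat I (e(y := a)) \<phi>)" using conjunct2[OF axZU] unfolding ax2_def by assumption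
  then have "sat I (e(y := Z)) \<phi> \<and> (\<forall>a. sat I (e(y := a)) \<phi> \<longrightarrow> sat I (e(y := S a)) \<phi>) \<longrightarrow> (\<forall>a. sat I (e(y := a)) \<phi>)" by blast
  then show ?thesis using sem base step by simp
qed

abbreviation tp (infixl "[+]" 65) where "tp \<equiv> App p"
abbreviation tt (infixl "[*]" 70) where "tt \<equiv> App t"

lemma add_assoc: "x \<oplus> (y \<oplus> z) = (x \<oplus> y) \<oplus> z"
proof (induction z rule: ind_fm[of "(\<lambda>_. x)(1:=x,2:=y)" 0 "Eq (Var 1 [+] (Var 2 [+] Var 0)) ((Var 1 [+] Var 2) [+] Var 0)"])
  case (1 a)
  then show ?case by simp
next
  case 2
  then show ?case by (simp add: idp)
next
  case (3 a)
  then show ?case by (simp add: add_S)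
qed

lemma one_comm: "U \<oplus> x = x \<oplus> U"
  by (induction x rule: ind_fm[of "\<lambda>_. U" 0 "Eq (Var 1 [+] Var 0) (Var 0 [+] Var 1)" ])
     (auto simp: idp add_S)

lemma Sx_add: "S x \<oplus> y = S (x \<oplus> y)"
  by (metis add_assoc one_comm)

lemma add_comm: "x \<oplus> y = y \<oplus> x"
  by (induction y rule: ind_fm[of "(\<lambda>_. x)(1:=x)" 0 "Eq (Var 1 [+] Var 0) (Var 0 [+] Var 1)" ])
     (auto simp: idp add_S Sx_add)

lemma add_cancel: "x \<oplus> z = y \<oplus> z \<Longrightarrow> x = y"
  by (induction z rule: ind_fm[of "(\<lambda>_. x)(1:=x,2:=y)" 0 "Disj (Neg (Eq (Var 1 [+] Var 0) (Var 2 [+] Var 0))) (Eq (Var 1) (Var 2))" ])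
     (auto simp: idp add_S dest: S_inj)

lemma add_cancel_left: "z \<oplus> x = z \<oplus> y \<Longrightarrow> x = y"
  by (metis add_cancel add_comm)

lemma zero_or_S: "x = Z \<or> (\<exists>w. x = S w)"
  by (induction x rule: ind_fm[of "(\<lambda>_. Z)(3:=U)" 0 "Disj (Eq (Var 0) (Var 1)) (Ex 2 (Eq (Var 0) (Var 2 [+] Var 3)))" ])
     (auto simp: idp add_S)

lemma add_eq_Z: "x \<oplus> y = Z \<Longrightarrow> y = Z"
  by (metis zero_or_S add_S S_nz)

lemma add_eq_Z2: "x \<oplus> y = Z \<Longrightarrow> x = Z"
  by (metis add_eq_Z add_comm)

lemma Z_mul: "Z \<otimes> x = Z"
  by (induction x rule: ind_fm[of "\<lambda>_. Z" 0 "Eq (Var 1 [*] Var 0) (Var 1)" ])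
     (auto simp: idp mul_Z mul_S)

lemma S_mul: "S x \<otimes> y = x \<otimes> y \<oplus> y"
  by (induction y rule: ind_fm[of "(\<lambda>_. x)(1:=x,2:=U)" 0 "Eq ((Var 1 [+] Var 2) [*] Var 0) (Var 1 [*] Var 0 [+] Var 0)" ])
     (auto simp: idp mul_Z mul_S add_S, metis add_assoc add_comm)

lemma mul_comm: "x \<otimes> y = y \<otimes> x"
  by (induction y rule: ind_fm[of "(\<lambda>_. x)(1:=x)" 0 "Eq (Var 1 [*] Var 0) (Var 0 [*] Var 1)" ])
     (auto simp: idp mul_Z mul_S Z_mul S_mul)

lemma distrib: "x \<otimes> (y \<oplus> z) = x \<otimes> y \<oplus> x \<otimes> z"
  by (induction z rule: ind_fm[of "(\<lambda>_. x)(1:=x,2:=y)" 0 "Eq (Var 1 [*] (Var 2 [+] Var 0)) (Var 1 [*] Var 2 [+] Var 1 [*] Var 0)" ])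
     (auto simp: idp mul_Z mul_S add_S add_assoc)

lemma mul_assoc: "x \<otimes> (y \<otimes> z) = (x \<otimes> y) \<otimes> z"
  by (induction z rule: ind_fm[of "(\<lambda>_. x)(1:=x,2:=y)" 0 "Eq (Var 1 [*] (Var 2 [*] Var 0)) ((Var 1 [*] Var 2) [*] Var 0)" ])
     (auto simp: idp idt mul_Z mul_S distrib)

lemma Z_ne_U: "Z \<noteq> U"
  by (metis S_nz idp(1))

end

sublocale pa \<subseteq> R: comm_semiring_1 "(\<otimes>)" U "(\<oplus>)" Z
  apply unfold_locales
  apply (rule mul_assoc[symmetric])
  apply (rule mul_comm)
  apply (rule idt)
  apply (rule add_assoc[symmetric])
  apply (rule add_comm)
  apply (rule idp)
  apply (metis distrib mul_comm)
  apply (rule Z_mul)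
  apply (rule mul_Z)
  apply (rule Z_ne_U)
  done

context pa begin

lemmas asimps = R.add.assoc R.add.commute R.add.left_commute R.mult.assoc R.mult.commute R.mult.left_commute
  R.distrib_left R.distrib_right

definition le (infix "\<preceq>" 50) where "x \<preceq> y \<longleftrightarrow> (\<exists>k. x \<oplus> k = y)"
definition lt (infix "\<prec>" 50) where "x \<prec> y \<longleftrightarrow> x \<preceq> y \<and> x \<noteq> y"

lemma le_total: "x \<preceq> y \<or> y \<preceq> x"
proof -
  have "\<forall>y. x \<preceq> y \<or> y \<preceq> x"
  proof (induction x rule: ind_fm[of "(\<lambda>_. Z)(3:=U)" 0
     "All 1 (Disj (Ex 2 (Eq (Var 0 [+] Var 2) (Var 1))) (Ex 2 (Eq (Var 1 [+] Var 2) (Var 0))))" ])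
    case (1 a)
    then show ?case by (simp add: le_def)
  next
    case 2
    then show ?case by (auto simp: le_def idp)
  next
    case (3 a)
    show ?case
    proof
      fix y
      from 3 have "a \<preceq> y \<or> y \<preceq> a" by blast
      then show "S a \<preceq> y \<or> y \<preceq> S a"
      proof
        assume "a \<preceq> y"
        then obtain k where k: "a \<oplus> k = y" by (auto simp: le_def)
        show ?thesis
        proof (cases "k = Z")
          case True
          then show ?thesis using k by (auto simp: le_def idp intro!: exI[of _ U])
        next
          case False
          then obtain w where "k = S w" using zero_or_S by blast
          then show ?thesis using k unfolding le_def by (metis Sx_add add_S)
        qed
      next
        assume "y \<preceq> a"
        then show ?thesis unfolding le_def by (metis add_assoc)
      qed
    qed
  qed
  then show ?thesis by blast
qed

lemma add_self_eq: "x \<oplus> k = x \<Longrightarrow> k = Z"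
  by (metis add_cancel add_comm idp(1))

lemma le_antisym: "x \<preceq> y \<Longrightarrow> y \<preceq> x \<Longrightarrow> x = y"
  unfolding le_def by (metis add_assoc add_self_eq add_eq_Z idp(2))

lemma le_refl: "x \<preceq> x" unfolding le_def by (metis idp(2))

lemma le_trans: "x \<preceq> y \<Longrightarrow> y \<preceq> z \<Longrightarrow> x \<preceq> z"
  unfolding le_def by (metis add_assoc)

definition monus (infixl "\<ominus>" 65) where
  "x \<ominus> y = (if y \<preceq> x then (THE k. y \<oplus> k = x) else Z)"

lemma monus_eq: "y \<oplus> k = x \<Longrightarrow> x \<ominus> y = k"
  unfolding monus_def le_def by (auto intro!: the_equality dest: add_cancel_left)

lemma monus_Z: "\<not> y \<preceq> x \<Longrightarrow> x \<ominus> y = Z"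
  unfolding monus_def by auto

lemma Z_le: "Z \<preceq> x" unfolding le_def by (metis idp(1))

lemma le_Z: "x \<preceq> Z \<Longrightarrow> x = Z" using Z_le le_antisym by blast

lemma add_le_mono: "x \<preceq> y \<Longrightarrow> z \<oplus> x \<preceq> z \<oplus> y"
  unfolding le_def by (metis add_assoc)

lemma add_le_cancel: "z \<oplus> x \<preceq> z \<oplus> y \<Longrightarrow> x \<preceq> y"
  unfolding le_def by (metis add_assoc add_cancel_left)

lemma mul_eq_Z: "x \<otimes> y = Z \<Longrightarrow> x = Z \<or> y = Z"
  by (metis zero_or_S mul_S add_eq_Z)

end

sublocale pa \<subseteq> O: linorder "(\<preceq>)" "(\<prec>)"
  using le_total by unfold_locales (auto simp: lt_def le_refl intro: le_trans le_antisym)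

sublocale pa \<subseteq> O: canonically_ordered_monoid_add "(\<oplus>)" Z "(\<preceq>)" "(\<prec>)"
  by unfold_locales (auto simp: le_def add_le_mono)

sublocale pa \<subseteq> O: linordered_comm_semiring_strict "(\<oplus>)" "(\<ominus>)" "(\<preceq>)" "(\<prec>)" Z "(\<otimes>)"
proof unfold_locales
  fix a b show "a \<oplus> b \<ominus> a = b" by (rule monus_eq) simp
next
  fix a b c
  show "a \<ominus> b \<ominus> c = a \<ominus> (b \<oplus> c)"
  proof (cases "b \<oplus> c \<preceq> a")
    case True
    then obtain k where k: "b \<oplus> c \<oplus> k = a" unfolding le_def by auto
    then have "a \<ominus> b = c \<oplus> k" by (intro monus_eq) (simp add: add_assoc)
    then show ?thesis using k by (metis monus_eq)
  next
    case False
    note F = False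
    show ?thesis
    proof (cases "b \<preceq> a")
      case True
      then obtain k where k: "b \<oplus> k = a" unfolding le_def by auto
      then have "a \<ominus> b = k" by (rule monus_eq)
      moreover have "\<not> c \<preceq> k" using F k add_le_mono by blast
      ultimately show ?thesis using F by (simp add: monus_Z)
    next
      case False
      then have "\<not> b \<oplus> c \<preceq> a" using le_trans O.le_iff_add by blast
      then show ?thesis using False by (cases "c = Z") (auto simp: monus_Z idp intro: monus_eq)
    qed
  qed
next
  fix a b c assume ab: "a \<prec> b" and c: "Z \<prec> c"
  then obtain k where k0: "b = a \<oplus> k" "a \<noteq> b" unfolding lt_def le_def by auto
  then have k: "b = a \<oplus> k" "k \<noteq> Z" by (auto simp: idp)
  then have "c \<otimes> b = c \<otimes> a \<oplus> c \<otimes> k" by (simp add: distrib)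
  moreover have "c \<otimes> k \<noteq> Z" using k c mul_eq_Z unfolding lt_def by blast
  ultimately show "c \<otimes> a \<prec> c \<otimes> b" unfolding lt_def le_def by (metis add_self_eq)
qed

context pa begin

lemma le_add2: "x \<preceq> y \<oplus> x" by (metis O.le_iff_add add_comm)
lemma le_add1: "x \<preceq> x \<oplus> y" by (metis O.le_iff_add)

lemma lt_S: "y \<prec> S y"
  unfolding lt_def using le_add1 add_self_eq Z_ne_U by metis

lemma lt_S_iff: "x \<prec> S y \<longleftrightarrow> x \<preceq> y"
proof
  assume "x \<prec> S y"
  then obtain k where k: "x \<oplus> k = S y" "x \<noteq> S y" unfolding lt_def le_def by auto
  then have "k \<noteq> Z" by (auto simp: idp)
  then obtain w where "k = S w" using zero_or_S by blast
  then have "x \<oplus> w = y" using k by (metis add_S S_inj)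
  then show "x \<preceq> y" unfolding le_def by blast
next
  assume "x \<preceq> y" then show "x \<prec> S y" using lt_S O.le_less_trans by blast
qed

lemma S_le_iff: "S x \<preceq> y \<longleftrightarrow> x \<prec> y"
  using lt_S_iff O.not_less by blast

lemma mul_ge: "k \<noteq> Z \<Longrightarrow> y \<preceq> k \<otimes> y"
  by (metis zero_or_S S_mul le_add2)

lemma div_unique:
  assumes eq: "q \<otimes> m \<oplus> r = q' \<otimes> m \<oplus> r'" and r: "r \<prec> m" and r': "r' \<prec> m"
  shows "r = r'"
proof -
  have *: "r = r'" if eq: "q \<otimes> m \<oplus> r = q' \<otimes> m \<oplus> r'" and r: "r \<prec> m" and r': "r' \<prec> m"
     and qq: "q \<preceq> q'" for q q' r r'
  proof -
    obtain k where k: "q' = q \<oplus> k" using qq O.le_iff_add by blast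
    then have "q \<otimes> m \<oplus> r = q \<otimes> m \<oplus> (k \<otimes> m \<oplus> r')" using eq by (simp add: asimps)
    then have rr: "r = k \<otimes> m \<oplus> r'" by (rule add_cancel_left)
    show ?thesis
    proof (cases "k = Z")
      case True then show ?thesis using rr by (simp add: Z_mul idp)
    next
      case False
      then have "m \<preceq> r" using rr mul_ge by (metis O.order_trans le_add1)
      then show ?thesis using r by simp
    qed
  qed
  show ?thesis using *[OF eq r r'] *[OF eq[symmetric] r' r] le_total by blast
qed

lemma div_exists: assumes mZ: "m \<noteq> Z" shows "\<exists>q r. x = q \<otimes> m \<oplus> r \<and> r \<prec> m"
proof (induction x rule: ind_fm[of "(\<lambda>_. Z)(1:=m)" 0
   "Ex 2 (Ex 3 (Conj (Eq (Var 0) (Var 2 [*] Var 1 [+] Var 3)) (Conj (Ex 4 (Eq (Var 3 [+] Var 4) (Var 1))) (Neg (Eq (Var 3) (Var 1))))))"])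
  case (1 a)
  then show ?case by (simp add: lt_def le_def)
next
  case 2
  then show ?case using mZ by (intro exI[of _ Z]) (auto simp: Z_mul idp lt_def Z_le)
next
  case (3 a)
  then obtain q r where qr: "a = q \<otimes> m \<oplus> r" "r \<prec> m" by blast
  show ?case
  proof (cases "S r = m")
    case True
    have "S a = q \<otimes> m \<oplus> S r" using qr by (simp add: add_assoc)
    also have "\<dots> = S q \<otimes> m \<oplus> Z" using True by (simp add: S_mul idp)
    finally have "S a = S q \<otimes> m \<oplus> Z" .
    then show ?thesis using mZ by (metis O.le_less Z_le)
  next
    case False
    then have "S r \<prec> m" using qr S_le_iff O.le_less by blast
    moreover have "S a = q \<otimes> m \<oplus> S r" using qr by (simp add: add_assoc)
    ultimately show ?thesis by blast
  qed
qed

definition md where "md x m = (THE r. \<exists>q. x = q \<otimes> m \<oplus> r \<and> r \<prec> m)"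

lemma md_eq: "x = q \<otimes> m \<oplus> r \<Longrightarrow> r \<prec> m \<Longrightarrow> md x m = r"
  unfolding md_def by (rule the_equality) (auto dest: div_unique)

lemma md_spec: "m \<noteq> Z \<Longrightarrow> \<exists>q. x = q \<otimes> m \<oplus> md x m \<and> md x m \<prec> m"
  using div_exists md_eq by metis

lemma md_le: "m \<noteq> Z \<Longrightarrow> md x m \<preceq> x"
  using md_spec le_add2 by metis

lemma md_add_mult: "m \<noteq> Z \<Longrightarrow> md (x \<oplus> k \<otimes> m) m = md x m"
proof -
  assume m: "m \<noteq> Z"
  then obtain q where q: "x = q \<otimes> m \<oplus> md x m" "md x m \<prec> m" using md_spec by blast
  then have "x \<oplus> k \<otimes> m = (q \<oplus> k) \<otimes> m \<oplus> md x m" by (simp add: asimps)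
  then show ?thesis using q md_eq by blast
qed

end

context pa begin

definition "mi d i = S i \<otimes> d \<oplus> U"
definition "beta c d i = md c (mi d i)"
definition "dv a b \<longleftrightarrow> (\<exists>k. b = k \<otimes> a)"
definition "Inv L m \<longleftrightarrow> (\<exists>a k. a \<otimes> L = k \<otimes> m \<oplus> U)"

lemma mi_nz: "mi d i \<noteq> Z" unfolding mi_def by (rule S_nz)

lemma LEf_sem[simp]: "k \<notin> tvars a \<Longrightarrow> k \<notin> tvars b \<Longrightarrow> sat I e (LEf p a b k) = (evalt I e a \<preceq> evalt I e b)"
  by (simp add: LEf_def le_def)
lemma LTf_sem[simp]: "k \<notin> tvars a \<Longrightarrow> k \<notin> tvars b \<Longrightarrow> sat I e (LTf p a b k) = (evalt I e a \<prec> evalt I e b)"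
  by (simp add: LTf_def lt_def)
lemma MODf_sem[simp]: "k \<notin> tvars x \<Longrightarrow> k \<notin> tvars m \<Longrightarrow> k \<notin> tvars r \<Longrightarrow> evalt I e m \<noteq> Z \<Longrightarrow>
   sat I e (MODf p t x m r k) = (md (evalt I e x) (evalt I e m) = evalt I e r)"
  unfolding MODf_def using md_spec[of "evalt I e m" "evalt I e x"] by (auto dest: md_eq)
lemma mit_sem[simp]: "evalt I e w = U \<Longrightarrow> evalt I e (mit p t i d w) = mi (evalt I e d) (evalt I e i)"
  by (simp add: mit_def mi_def)
lemma tvars_mit[simp]: "tvars (mit p t i d w) = tvars i \<union> tvars d \<union> tvars w"
  by (auto simp: mit_def)
lemma BETAf_sem[simp]: "k \<notin> tvars c \<Longrightarrow> k \<notin> tvars d \<Longrightarrow> k \<notin> tvars i \<Longrightarrow> k \<notin> tvars r \<Longrightarrow> k \<notin> tvars w \<Longrightarrow>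
   evalt I e w = U \<Longrightarrow>
   sat I e (BETAf p t c d i r w k) = (beta (evalt I e c) (evalt I e d) (evalt I e i) = evalt I e r)"
  unfolding BETAf_def beta_def by (subst MODf_sem) (auto simp: mi_nz)
lemma DVDf_sem[simp]: "k \<notin> tvars m \<Longrightarrow> k \<notin> tvars L \<Longrightarrow> sat I e (DVDf t m L k) = dv (evalt I e m) (evalt I e L)"
  by (simp add: DVDf_def dv_def)
lemma INVf_sem[simp]: "k1 \<notin> tvars m \<Longrightarrow> k1 \<notin> tvars L \<Longrightarrow> k1 \<notin> tvars w \<Longrightarrow>
   k2 \<notin> tvars m \<Longrightarrow> k2 \<notin> tvars L \<Longrightarrow> k2 \<notin> tvars w \<Longrightarrow> k1 \<noteq> k2 \<Longrightarrow> evalt I e w = U \<Longrightarrow>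
   sat I e (INVf p t L m w k1 k2) = Inv (evalt I e L) (evalt I e m)"
  by (simp add: INVf_def Inv_def)

end

context pa begin

lemma nz_ge_U: "k \<noteq> Z \<Longrightarrow> U \<preceq> k"
  by (metis zero_or_S le_add2)

lemma le_S_cases: "k \<preceq> S n \<Longrightarrow> k \<preceq> n \<or> k = S n"
  using lt_S_iff O.le_less by blast

lemma exD: "\<exists>D. D \<noteq> Z \<and> (\<forall>k. U \<preceq> k \<and> k \<preceq> n \<longrightarrow> dv k D)"
proof (induction n rule: ind_fm[of "(\<lambda>_. Z)(2:=U)" 0
  "Ex 5 (Conj (Neg (Eq (Var 5) (Var 1))) (All 6 (Disj (Neg (Conj (LEf p (Var 2) (Var 6) 30) (LEf p (Var 6) (Var 0) 30))) (DVDf t (Var 6) (Var 5) 30))))"])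
  case (1 a)
  then show ?case by auto
next
  case 2
  then show ?case using Z_ne_U by (metis O.antisym_conv le_Z)
next
  case (3 a)
  then obtain D where D: "D \<noteq> Z" "\<forall>k. U \<preceq> k \<and> k \<preceq> a \<longrightarrow> dv k D" by blast
  have "D \<otimes> S a \<noteq> Z" using D(1) S_nz mul_eq_Z by blast
  moreover have "\<forall>k. U \<preceq> k \<and> k \<preceq> S a \<longrightarrow> dv k (D \<otimes> S a)"
  proof (intro allI impI)
    fix k assume k: "U \<preceq> k \<and> k \<preceq> S a"
    then consider "k \<preceq> a" | "k = S a" using le_S_cases by blast
    then show "dv k (D \<otimes> S a)"
    proof cases
      case 1
      then obtain l where "D = l \<otimes> k" using D k unfolding dv_def by blast
      then show ?thesis unfolding dv_def by (metis mul_assoc mul_comm)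
    next
      case 2 then show ?thesis unfolding dv_def by blast
    qed
  qed
  ultimately show ?case by blast
qed

lemma Inv_mult: "Inv A m \<Longrightarrow> Inv B m \<Longrightarrow> Inv (A \<otimes> B) m"
proof -
  assume "Inv A m" "Inv B m"
  then obtain a k b l where ak: "a \<otimes> A = k \<otimes> m \<oplus> U" and bl: "b \<otimes> B = l \<otimes> m \<oplus> U"
    unfolding Inv_def by blast
  have "(a \<otimes> b) \<otimes> (A \<otimes> B) = (a \<otimes> A) \<otimes> (b \<otimes> B)" by (simp add: asimps)
  also have "\<dots> = (k \<otimes> l \<otimes> m \<oplus> k \<oplus> l) \<otimes> m \<oplus> U" unfolding ak bl by (simp add: asimps idt)
  finally show ?thesis unfolding Inv_def by blast
qed

lemma Inv_pair:
  assumes d: "d \<noteq> Z" and N: "\<forall>k. U \<preceq> k \<and> k \<preceq> N \<longrightarrow> dv k d" and ij: "i \<prec> j" and jN: "j \<preceq> N"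
  shows "Inv (mi d i) (mi d j)"
proof -
  obtain k where jk: "j = i \<oplus> k" and kZ: "k \<noteq> Z" using ij unfolding lt_def le_def by (metis idp(2))
  have "k \<preceq> N" using jN jk le_add2 O.order_trans by metis
  then obtain e0 where e0: "d = e0 \<otimes> k" using N nz_ge_U[OF kZ] unfolding dv_def by blast
  define W where "W = S j \<otimes> d"
  have "W \<noteq> Z" unfolding W_def using d S_nz mul_eq_Z by blast
  then obtain V where V: "W = S V" using zero_or_S by blast
  have mj: "mi d j = S W" unfolding mi_def W_def ..
  have key: "S j \<otimes> mi d i = S i \<otimes> mi d j \<oplus> k"
    unfolding mi_def jk by (simp add: asimps idt)
  have WW: "W \<otimes> W = V \<otimes> mi d j \<oplus> U"
  proof -
    have "S V \<otimes> S V = (V \<otimes> V \<oplus> V) \<oplus> (V \<oplus> U)" using mul_S S_mul by metis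
    moreover have "V \<otimes> S (S V) \<oplus> U = ((V \<otimes> V \<oplus> V) \<oplus> V) \<oplus> U" using mul_S by metis
    ultimately show ?thesis unfolding mj V using add_assoc by metis
  qed
  have "(S j \<otimes> S j \<otimes> W \<otimes> e0) \<otimes> mi d i = (S j \<otimes> W \<otimes> e0) \<otimes> (S j \<otimes> mi d i)"
    by (simp add: asimps)
  also have "\<dots> = (S j \<otimes> W \<otimes> e0 \<otimes> S i) \<otimes> mi d j \<oplus> W \<otimes> (S j \<otimes> (e0 \<otimes> k))"
    unfolding key by (simp add: asimps)
  also have "\<dots> = (S j \<otimes> W \<otimes> e0 \<otimes> S i) \<otimes> mi d j \<oplus> W \<otimes> W"
    unfolding W_def e0 ..
  also have "\<dots> = (S j \<otimes> W \<otimes> e0 \<otimes> S i \<oplus> V) \<otimes> mi d j \<oplus> U"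
    unfolding WW by (simp add: asimps)
  finally show ?thesis unfolding Inv_def by blast
qed

end



context pa begin

lemma Z_lt_U: "Z \<prec> U" by (metis lt_S idp(1))

lemma S_le_S: "S a \<preceq> S b \<longleftrightarrow> a \<preceq> b"
  using S_le_iff lt_S_iff by blast

lemma lt_S_cases: "i \<prec> S a \<Longrightarrow> i \<prec> a \<or> i = a"
  using lt_S_iff O.le_less by blast

lemma dv_mult: "dv m L \<Longrightarrow> dv m (L \<otimes> X)"
  unfolding dv_def by (metis mul_assoc mul_comm)

lemma Lexists:
  assumes d: "d \<noteq> Z" and N: "\<forall>k. U \<preceq> k \<and> k \<preceq> N \<longrightarrow> dv k d"
  shows "n \<preceq> S N \<longrightarrow> (\<exists>L. (\<forall>i. i \<prec> n \<longrightarrow> dv (mi d i) L) \<and> (\<forall>j. n \<preceq> j \<and> j \<preceq> N \<longrightarrow> Inv L (mi d j)))"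
proof (induction n rule: ind_fm[of "(\<lambda>_. Z)(1:=N, 2:=U, 3:=d)" 0
  "Disj (Neg (LEf p (Var 0) (Var 1 [+] Var 2) 30))
   (Ex 5 (Conj (All 6 (Disj (Neg (LTf p (Var 6) (Var 0) 30)) (DVDf t (mit p t (Var 6) (Var 3) (Var 2)) (Var 5) 30)))
             (All 6 (Disj (Neg (Conj (LEf p (Var 0) (Var 6) 30) (LEf p (Var 6) (Var 1) 30))) (INVf p t (Var 5) (mit p t (Var 6) (Var 3) (Var 2)) (Var 2) 30 31)))))"])
  case (1 a)
  then show ?case by auto
next
  case 2
  have "Inv U m" for m unfolding Inv_def by (metis Z_mul idp(1) idt(1))
  then show ?case by (metis O.not_less_zero)
next
  case (3 a)
  show ?case
  proof
    assume Sa: "S a \<preceq> S N"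
    then have aN: "a \<preceq> N" using S_le_S by blast
    then have "a \<preceq> S N" using O.order_trans le_add1 by blast
    then obtain L where L: "\<forall>i. i \<prec> a \<longrightarrow> dv (mi d i) L" "\<forall>j. a \<preceq> j \<and> j \<preceq> N \<longrightarrow> Inv L (mi d j)"
      using 3 by blast
    have "\<forall>i. i \<prec> S a \<longrightarrow> dv (mi d i) (L \<otimes> mi d a)"
      using L(1) lt_S_cases dv_mult unfolding dv_def by (metis mul_comm)
    moreover have "\<forall>j. S a \<preceq> j \<and> j \<preceq> N \<longrightarrow> Inv (L \<otimes> mi d a) (mi d j)"
    proof (intro allI impI)
      fix j assume j: "S a \<preceq> j \<and> j \<preceq> N"
      then have "a \<prec> j" using S_le_iff by blast
      then show "Inv (L \<otimes> mi d a) (mi d j)"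
        using L(2) Inv_pair[OF d N _ ] j Inv_mult O.less_imp_le by blast
    qed
    ultimately show "\<exists>L. (\<forall>i. i \<prec> S a \<longrightarrow> dv (mi d i) L) \<and> (\<forall>j. S a \<preceq> j \<and> j \<preceq> N \<longrightarrow> Inv L (mi d j))"
      by blast
  qed
qed

lemma crt_step:
  assumes inv: "Inv L m" and r: "r \<prec> m"
  shows "\<exists>t. md (c \<oplus> t \<otimes> L) m = r"
proof -
  have m: "m \<noteq> Z" using r O.not_less_zero by blast
  obtain a K where aK: "a \<otimes> L = K \<otimes> m \<oplus> U" using inv unfolding Inv_def by blast
  obtain q where q: "c = q \<otimes> m \<oplus> md c m" "md c m \<prec> m" using md_spec[OF m] by blast
  obtain w where w: "md c m \<oplus> w = m" using q(2) unfolding lt_def le_def by blast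
  have "c \<oplus> (a \<otimes> (r \<oplus> w)) \<otimes> L = q \<otimes> m \<oplus> md c m \<oplus> (r \<oplus> w) \<otimes> (a \<otimes> L)"
    using q(1) by (metis mul_assoc mul_comm)
  also have "\<dots> = q \<otimes> m \<oplus> (r \<oplus> w) \<otimes> K \<otimes> m \<oplus> (md c m \<oplus> w) \<oplus> r"
    unfolding aK by (simp add: asimps idt)
  also have "\<dots> = (q \<oplus> (r \<oplus> w) \<otimes> K \<oplus> U) \<otimes> m \<oplus> r"
    unfolding w by (simp add: asimps idt)
  finally show ?thesis using md_eq r by blast
qed

definition "fv c d x v i = (if i \<preceq> x then beta c d i else v)"

lemma crt:
  assumes d': "d' \<noteq> Z" and N: "\<forall>k. U \<preceq> k \<and> k \<preceq> S x \<longrightarrow> dv k d'"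
    and bnd: "\<forall>i. i \<preceq> S x \<longrightarrow> fv c d x v i \<prec> mi d' i"
  shows "n \<preceq> S (S x) \<longrightarrow> (\<exists>c'. \<forall>i. i \<prec> n \<longrightarrow> beta c' d' i = fv c d x v i)"
proof (induction n rule: ind_fm[of "(\<lambda>_. Z)(1:=x, 2:=U, 3:=c, 4:=d, 5:=v, 6:=d')" 0
  "Disj (Neg (LEf p (Var 0) ((Var 1 [+] Var 2) [+] Var 2) 30))
   (Ex 7 (All 8 (Disj (Neg (LTf p (Var 8) (Var 0) 30))
    (Disj (Conj (LEf p (Var 8) (Var 1) 30) (Ex 9 (Conj (BETAf p t (Var 3) (Var 4) (Var 8) (Var 9) (Var 2) 30) (BETAf p t (Var 7) (Var 6) (Var 8) (Var 9) (Var 2) 30))))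
          (Conj (Neg (LEf p (Var 8) (Var 1) 30)) (BETAf p t (Var 7) (Var 6) (Var 8) (Var 5) (Var 2) 30))))))"])
  case (1 a)
  then show ?case by (auto simp: fv_def)
next
  case 2
  then show ?case by (metis O.not_less_zero)
next
  case (3 a)
  show ?case
  proof
    assume Sa: "S a \<preceq> S (S x)"
    then have ax: "a \<preceq> S x" using S_le_S by blast
    then have aSSx: "a \<preceq> S (S x)" using O.order_trans le_add1 by blast
    then obtain c' where c': "\<forall>i. i \<prec> a \<longrightarrow> beta c' d' i = fv c d x v i" using 3 by blast
    obtain L where L: "\<forall>i. i \<prec> a \<longrightarrow> dv (mi d' i) L" "Inv L (mi d' a)"
    proof -
      have "a \<preceq> a" by (rule O.order_refl)
      then show ?thesis using that Lexists[OF d' N, of a] aSSx ax by blast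
    qed
    obtain tt where tt: "md (c' \<oplus> tt \<otimes> L) (mi d' a) = fv c d x v a"
      using crt_step[OF L(2) bnd[rule_format, OF ax]] by blast
    have "\<forall>i. i \<prec> S a \<longrightarrow> beta (c' \<oplus> tt \<otimes> L) d' i = fv c d x v i"
    proof (intro allI impI)
      fix i assume "i \<prec> S a"
      then consider "i \<prec> a" | "i = a" using lt_S_cases by blast
      then show "beta (c' \<oplus> tt \<otimes> L) d' i = fv c d x v i"
      proof cases
        case 1
        then obtain l where "L = l \<otimes> mi d' i" using L(1) unfolding dv_def by blast
        then have "c' \<oplus> tt \<otimes> L = c' \<oplus> (tt \<otimes> l) \<otimes> mi d' i" by (simp add: mul_assoc)
        then show ?thesis using c' 1 md_add_mult mi_nz unfolding beta_def by metis
      next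
        case 2 then show ?thesis using tt unfolding beta_def by simp
      qed
    qed
    then show "\<exists>c'. \<forall>i. i \<prec> S a \<longrightarrow> beta c' d' i = fv c d x v i" by blast
  qed
qed


definition "Good q z u c d x \<longleftrightarrow> beta c d Z = z \<and> (\<forall>i. i \<prec> x \<longrightarrow> beta c d (S i) = I q (beta c d i) u)"

definition "GOODf q c d x = Conj (BETAf p t c d (Var 1) (Var 3) (Var 2) 30)
   (All 31 (Disj (Neg (LTf p (Var 31) x 30))
     (Ex 32 (Conj (BETAf p t c d (Var 31) (Var 32) (Var 2) 30)
                  (BETAf p t c d (Var 31 [+] Var 2) (App q (Var 32) (Var 4)) (Var 2) 30)))))"

lemma GOODf_sem[simp]:
  assumes "e 1 = Z" "e 2 = U" "e 3 = z" "e 4 = u"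
    and "30 \<notin> tvars c" "31 \<notin> tvars c" "32 \<notin> tvars c"
    and "30 \<notin> tvars d" "31 \<notin> tvars d" "32 \<notin> tvars d"
    and "30 \<notin> tvars x" "31 \<notin> tvars x" "32 \<notin> tvars x"
  shows "sat I e (GOODf q c d x) = Good q z u (evalt I e c) (evalt I e d) (evalt I e x)"
  using assms unfolding GOODf_def Good_def by auto

lemma seq: "\<exists>c d. Good q z u c d x"
proof (induction x rule: ind_fm[of "(\<lambda>_. Z)(2:=U, 3:=z, 4:=u)" 0 "Ex 5 (Ex 6 (GOODf q (Var 5) (Var 6) (Var 0)))"])
  case (1 a)
  then show ?case by simp
next
  case 2
  have "beta z z Z = z" unfolding beta_def mi_def
    by (rule md_eq[of _ Z]) (auto simp: Z_mul idp idt lt_S Z_lt_U)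
  then show ?case unfolding Good_def by (metis O.not_less_zero)
next
  case (3 a)
  then obtain c d where cd: "Good q z u c d a" by blast
  define v where "v = I q (beta c d a) u"
  define B where "B = c \<oplus> v"
  obtain D where D: "D \<noteq> Z" "\<forall>k. U \<preceq> k \<and> k \<preceq> S a \<longrightarrow> dv k D" using exD by blast
  define d' where "d' = D \<otimes> S B"
  have d'Z: "d' \<noteq> Z" unfolding d'_def using D(1) S_nz mul_eq_Z by blast
  have N: "\<forall>k. U \<preceq> k \<and> k \<preceq> S a \<longrightarrow> dv k d'" unfolding d'_def using D(2) dv_mult by blast
  have Bd: "B \<prec> mi d' i" for i
  proof -
    have "B \<prec> S B" by (rule lt_S)
    also have "S B \<preceq> d'" unfolding d'_def using mul_ge[OF D(1)] mul_comm by metis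
    also have "d' \<preceq> S i \<otimes> d'" using mul_ge S_nz by blast
    also have "S i \<otimes> d' \<prec> mi d' i" unfolding mi_def by (rule lt_S)
    finally show ?thesis .
  qed
  have fvB: "fv c d a v i \<preceq> B" for i
  proof (cases "i \<preceq> a")
    case True
    then have "fv c d a v i = md c (mi d i)" unfolding fv_def beta_def by simp
    also have "\<dots> \<preceq> c" using md_le mi_nz by blast
    also have "c \<preceq> B" unfolding B_def by (rule le_add1)
    finally show ?thesis .
  next
    case False
    then show ?thesis unfolding fv_def B_def using le_add2 by simp
  qed
  have bnd: "\<forall>i. i \<preceq> S a \<longrightarrow> fv c d a v i \<prec> mi d' i"
    using fvB Bd O.le_less_trans by blast
  obtain c' where c': "\<forall>i. i \<prec> S (S a) \<longrightarrow> beta c' d' i = fv c d a v i"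
    using crt[OF d'Z N bnd, of "S (S a)"] O.order_refl by blast
  have "Good q z u c' d' (S a)"
    unfolding Good_def
  proof (intro conjI allI impI)
    have "Z \<prec> S (S a)" using Z_le lt_S O.le_less_trans by blast
    then show "beta c' d' Z = z" using c' cd Z_le unfolding fv_def Good_def by simp
  next
    fix i assume i: "i \<prec> S a"
    then have ia: "i \<preceq> a" using lt_S_iff by blast
    have SiSSa: "S i \<prec> S (S a)" using i S_le_iff S_le_S by blast
    have iSSa: "i \<prec> S (S a)" using i O.less_trans lt_S by blast
    have bi: "beta c' d' i = beta c d i" using c' iSSa ia unfolding fv_def by simp
    show "beta c' d' (S i) = I q (beta c' d' i) u"
    proof (cases "S i \<preceq> a")
      case True
      then have "i \<prec> a" using S_le_iff by blast
      then show ?thesis using c' SiSSa True bi cd unfolding fv_def Good_def by simp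
    next
      case False
      then have "i = a" using ia S_le_iff O.le_less by blast
      then show ?thesis using c' SiSSa False bi unfolding fv_def v_def by simp
    qed
  qed
  then show ?case by blast
qed

lemma good_uniq:
  assumes g1: "Good q z u c d x" and g2: "Good q z u c' d' x"
  shows "i \<preceq> x \<longrightarrow> beta c d i = beta c' d' i"
proof (induction i rule: ind_fm[of "(\<lambda>_. Z)(1:=x, 2:=U, 3:=c, 4:=d, 5:=c', 6:=d')" 0
  "Disj (Neg (LEf p (Var 0) (Var 1) 30)) (Ex 7 (Conj (BETAf p t (Var 3) (Var 4) (Var 0) (Var 7) (Var 2) 30) (BETAf p t (Var 5) (Var 6) (Var 0) (Var 7) (Var 2) 30)))"])
  case (1 a)
  then show ?case by auto
next
  case 2
  then show ?case using g1 g2 unfolding Good_def by simp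
next
  case (3 a)
  show ?case
  proof
    assume "S a \<preceq> x"
    then have ax: "a \<prec> x" using S_le_iff by blast
    then have "beta c d a = beta c' d' a" using 3 O.less_imp_le by blast
    then show "beta c d (S a) = beta c' d' (S a)" using g1 g2 ax unfolding Good_def by simp
  qed
qed

definition "Phi q z u x y \<longleftrightarrow> (\<exists>c d. Good q z u c d x \<and> beta c d x = y)"

lemma Phi_total: "\<exists>y. Phi q z u x y"
  using seq unfolding Phi_def by blast

lemma Phi_fun: "Phi q z u x y \<Longrightarrow> Phi q z u x y' \<Longrightarrow> y = y'"
  unfolding Phi_def using good_uniq O.order_refl by blast

lemma Good_mono: "Good q z u c d (S x) \<Longrightarrow> Good q z u c d x"
  unfolding Good_def using lt_S O.less_trans by blast

lemma Phi_Z: "Phi q z u Z z"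
  unfolding Phi_def using seq[of q z u Z] unfolding Good_def by blast

lemma Phi_S: "Phi q z u x y \<Longrightarrow> Phi q z u (S x) (I q y u)"
proof -
  assume "Phi q z u x y"
  then obtain c d where cd: "Good q z u c d x" "beta c d x = y" unfolding Phi_def by blast
  obtain c' d' where g: "Good q z u c' d' (S x)" using seq by blast
  then have "beta c' d' x = y" using good_uniq[OF Good_mono[OF g] cd(1)] cd(2) O.order_refl by blast
  then have "beta c' d' (S x) = I q y u" using g lt_S unfolding Good_def by blast
  then show ?thesis using g unfolding Phi_def by blast
qed

definition "PHIf q x y = Ex 33 (Ex 34 (Conj (GOODf q (Var 33) (Var 34) x) (BETAf p t (Var 33) (Var 34) x y (Var 2) 30)))"

lemma PHIf_sem[simp]:
  assumes "e 1 = Z" "e 2 = U" "e 3 = z" "e 4 = u"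
    and "30 \<notin> tvars x" "31 \<notin> tvars x" "32 \<notin> tvars x" "33 \<notin> tvars x" "34 \<notin> tvars x"
    and "30 \<notin> tvars y" "33 \<notin> tvars y" "34 \<notin> tvars y"
  shows "sat I e (PHIf q x y) = Phi q z u (evalt I e x) (evalt I e y)"
  using assms unfolding PHIf_def Phi_def by auto

end


lemma (in pa) zero_char: "(\<forall>w. I p w z = w) \<longleftrightarrow> z = Z"
  by (metis idp)
lemma (in pa) one_char: "(\<forall>w. I t w u = w) \<longleftrightarrow> u = U"
  by (metis idt)

theorem mainTheorem3:
  fixes I :: "fsym \<Rightarrow> 'a \<Rightarrow> 'a \<Rightarrow> 'a"
  assumes "peano_model I Plus Times"
      and "peano_model I Plus' Times'"
  shows "\<exists>\<pi>. reduct_iso I \<pi> \<and> fo_definable_fun I \<pi>"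
proof -
  interpret P1: pa I Plus Times by (rule pa.intro) (rule assms(1))
  interpret P2: pa I Plus' Times' by (rule pa.intro) (rule assms(2))
  define Ph where "Ph = P1.Phi Plus' P2.Z P2.U"
  define \<pi> where "\<pi> x = (THE y. Ph x y)" for x
  have piPh: "Ph x y \<longleftrightarrow> \<pi> x = y" for x y
  proof -
    obtain y0 where y0: "Ph x y0" using P1.Phi_total unfolding Ph_def by blast
    then have "\<pi> x = y0" unfolding \<pi>_def by (rule the_equality) (use P1.Phi_fun y0 in \<open>unfold Ph_def, blast\<close>)
    then show ?thesis using y0 P1.Phi_fun unfolding Ph_def by blast
  qed
  have pi0: "\<pi> P1.Z = P2.Z" using P1.Phi_Z piPh unfolding Ph_def by blast
  have piS: "\<pi> (I Plus x P1.U) = I Plus' (\<pi> x) P2.U" for x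
    using P1.Phi_S piPh unfolding Ph_def by blast
  define E :: "nat \<Rightarrow> 'a" where "E = (\<lambda>_. P1.Z)(2:=P1.U, 3:=P2.Z, 4:=P2.U)"
  have surj: "\<exists>x. \<pi> x = y" for y
  proof (induction y rule: P2.ind_fm[of E 0 "Ex 6 (P1.PHIf Plus' (Var 6) (Var 0))"])
    case (1 a)
    then show ?case unfolding E_def by (simp add: piPh[symmetric] Ph_def)
  next
    case 2
    then show ?case using pi0 by blast
  next
    case (3 a)
    then show ?case using piS by blast
  qed
  have inj: "\<forall>x'. \<pi> x = \<pi> x' \<longrightarrow> x = x'" for x
  proof (induction x rule: P1.ind_fm[of E 0
     "All 6 (Disj (Neg (Ex 7 (Conj (P1.PHIf Plus' (Var 0) (Var 7)) (P1.PHIf Plus' (Var 6) (Var 7))))) (Eq (Var 0) (Var 6)))"])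
    case (1 a)
    then show ?case unfolding E_def by (simp add: piPh Ph_def[symmetric]) metis
  next
    case 2
    show ?case
    proof (intro allI impI)
      fix x' assume "\<pi> P1.Z = \<pi> x'"
      then show "P1.Z = x'" using pi0 piS P1.zero_or_S P2.S_nz by metis
    qed
  next
    case (3 a)
    show ?case
    proof (intro allI impI)
      fix x' assume h: "\<pi> (I Plus a P1.U) = \<pi> x'"
      show "I Plus a P1.U = x'"
      proof (cases "x' = P1.Z")
        case True
        then show ?thesis using h pi0 piS P2.S_nz by metis
      next
        case False
        then obtain w where w: "x' = I Plus w P1.U" using P1.zero_or_S by blast
        then have "\<pi> a = \<pi> w" using h piS P2.S_inj by metis
        then show ?thesis using 3 w by blast
      qed
    qed
  qed
  have hadd: "\<forall>a. \<pi> (I Plus a b) = I Plus' (\<pi> a) (\<pi> b)" for b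
  proof (induction b rule: P1.ind_fm[of E 0
     "All 6 (Ex 7 (Ex 8 (Ex 9 (Conj (P1.PHIf Plus' (App Plus (Var 6) (Var 0)) (Var 7))
        (Conj (P1.PHIf Plus' (Var 6) (Var 8)) (Conj (P1.PHIf Plus' (Var 0) (Var 9)) (Eq (Var 7) (App Plus' (Var 8) (Var 9)))))))))"])
    case (1 a)
    then show ?case unfolding E_def by (simp add: piPh Ph_def[symmetric])
  next
    case 2
    then show ?case using pi0 P1.idp P2.idp by simp
  next
    case (3 b)
    then show ?case using piS P1.add_S P2.add_S by simp
  qed
  have hmul: "\<forall>a. \<pi> (I Times a b) = I Times' (\<pi> a) (\<pi> b)" for b
  proof (induction b rule: P1.ind_fm[of E 0
     "All 6 (Ex 7 (Ex 8 (Ex 9 (Conj (P1.PHIf Plus' (App Times (Var 6) (Var 0)) (Var 7))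
        (Conj (P1.PHIf Plus' (Var 6) (Var 8)) (Conj (P1.PHIf Plus' (Var 0) (Var 9)) (Eq (Var 7) (App Times' (Var 8) (Var 9)))))))))"])
    case (1 a)
    then show ?case unfolding E_def by (simp add: piPh Ph_def[symmetric])
  next
    case 2
    then show ?case using pi0 P1.mul_Z P2.mul_Z by simp
  next
    case (3 b)
    then show ?case using piS P1.mul_S P2.mul_S hadd by simp
  qed
  have iso: "reduct_iso I \<pi>"
    unfolding reduct_iso_def bij_def inj_def surj_def using inj surj hadd hmul by metis
  define \<phi> where "\<phi> = Ex 1 (Conj (All 40 (Eq (App Plus (Var 40) (Var 1)) (Var 40)))
     (Ex 2 (Conj (All 40 (Eq (App Times (Var 40) (Var 2)) (Var 40)))
     (Ex 3 (Conj (All 40 (Eq (App Plus' (Var 40) (Var 3)) (Var 40)))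
     (Ex 4 (Conj (All 40 (Eq (App Times' (Var 40) (Var 4)) (Var 40)))
        (P1.PHIf Plus' (Var 0) (Var 5)))))))))"
  have "sat I e \<phi> \<longleftrightarrow> \<pi> (e 0) = e 5" for e
    unfolding \<phi>_def by (simp add: P1.zero_char P1.one_char P2.zero_char P2.one_char piPh[symmetric] Ph_def)
  then have "fo_definable_fun I \<pi>" unfolding fo_definable_fun_def by (intro exI[of _ \<phi>] exI[of _ 0] exI[of _ 5]) simp
  then show ?thesis using iso by blast
qed

end
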